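(* Let $f:\mathbb{R}^n\to\mathbb{R}$ and $c:\mathbb{R}^n\to\mathbb{R}^m$ ($m<n$) be smooth, with $g(x)=\nabla f(x)$ and Jacobian $J(x)=\nabla c(x)\in\mathbb{R}^{m\times n}$. Suppose noisy evaluations $\tilde f,\tilde c,\tilde g,\tilde J$ satisfy, for all $x$, $|\tilde f(x)-f(x)|\le\epsilon_f$, $\|\tilde c(x)-c(x)\|_1\le\epsilon_c$, $\|\tilde g(x)-g(x)\|\le\epsilon_g$, $\|\tilde J(x)-J(x)\|_{1,2}\le\epsilon_J$. Let $\{x_k\}$ be a sequence of points with $\sigma_{\min}(J_k)\ge\gamma$ for all $k$, where $\gamma>\epsilon_J$, and set $\delta=1/(\gamma-\epsilon_J)$, $\eta=1/\gamma$. For $\beta_k>0$ let $d_k$ solve $\min_d\ \tfrac12\beta_k\|d\|^2+\tilde g_k^Td$ subject to $\tilde c_k+\tilde J_kd=0$. Fix $\tau\in(0,1)$ and suppose that at every iteration $k$ the penalty parameter $\pi_k>0$ satisfies $$\pi_k\ge\frac{1}{1-\tau}\big\|(\tilde J_k\tilde J_k^T)^{-1}\tilde J_k\tilde g_k\big\|_\infty.$$ Then, with $\ell(x_k;d_k)=g_k^Td_k+\pi_k\|c_k+J_kd_k\|_1-\pi_k\|c_k\|_1$, $$\ell(x_k;d_k)\le-\frac{1}{\beta_k}g_k^TP_kg_k+\frac{1}{\beta_k}\big(\|g_k\|^2\eta\epsilon_J+\epsilon_g\|g_k\|\big)-\tau\pi_k\|c_k\|_1+\epsilon_g\delta(\|c_k\|_1+\epsilon_c)$$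 $$\qquad+\pi_k\Big((2-\tau)\epsilon_c+\epsilon_J\Big(\delta(\|c_k\|_1+\epsilon_c)+\frac{1}{\beta_k}\big(\|P_kg_k\|+\|g_k\|\eta\epsilon_J+\epsilon_g\big)\Big)\Big).$$
   Context: $\|\cdot\|$ denotes the Euclidean norm; $\|\cdot\|_{1,2}$ is the matrix norm $\sup_{x\ne0}\|Ax\|_1/\|x\|$ for $A\in\mathbb{R}^{m\times n}$; $\sigma_{\min}$ is the smallest singular value. Subscript $k$ denotes evaluation at $x_k$: $g_k=g(x_k)$, $c_k=c(x_k)$, $J_k=J(x_k)$, $\tilde g_k=\tilde g(x_k)$, $\tilde c_k=\tilde c(x_k)$, $\tilde J_k=\tilde J(x_k)$. $P_k=I-J_k^T(J_kJ_k^T)^{-1}J_k$ is the orthogonal projection onto the null space of $J_k$. *)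

theory Defs
  imports "HOL-Analysis.Analysis"
begin

definition norm1 :: "real^'m \<Rightarrow> real" where
  "norm1 v = (\<Sum>i\<in>UNIV. \<bar>v $ i\<bar>)"

definition norm_inf :: "real^'m \<Rightarrow> real" where
  "norm_inf v = Max ((\<lambda>i. \<bar>v $ i\<bar>) ` UNIV)"

definition norm12 :: "real^'n^'m \<Rightarrow> real" where
  "norm12 A = Sup {norm1 (A *v x) / norm x | x. x \<noteq> 0}"

text \<open>smallest singular value of an m x n matrix with m <= n
  (the m singular values are those of A^T; smallest = min over unit y of ||A^T y||)\<close>
definition sigma_min :: "real^'n^'m \<Rightarrow> real" where
  "sigma_min A = Inf {norm (transpose A *v y) | y. norm y = 1}"

definition null_proj :: "real^'n^'m \<Rightarrow> real^'n^'n" where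
  "null_proj J = mat 1 - transpose J ** matrix_inv (J ** transpose J) ** J"

end

theory Submission
  imports Defs
begin

definition QQ :: "real^'n^'m \<Rightarrow> real^'n \<Rightarrow> real^'n" where
  "QQ A z = transpose A *v (matrix_inv (A ** transpose A) *v (A *v z))"
definition PP :: "real^'n^'m \<Rightarrow> real^'n \<Rightarrow> real^'n" where
  "PP A z = z - QQ A z"

lemma minv:
  fixes M :: "real^'m^'m"
  assumes "invertible M"
  shows "M ** matrix_inv M = mat 1" "matrix_inv M ** M = mat 1"
proof -
  have "\<exists>A'. M ** A' = mat 1 \<and> A' ** M = mat 1" using assms invertible_def by blast
  then have "M ** matrix_inv M = mat 1 \<and> matrix_inv M ** M = mat 1"
    unfolding matrix_inv_def by (rule someI_ex)
  then show "M ** matrix_inv M = mat 1" "matrix_inv M ** M = mat 1" by auto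
qed

lemma minv_app:
  fixes M :: "real^'m^'m"
  assumes "invertible M" shows "M *v (matrix_inv M *v v) = v"
  by (metis assms matrix_vector_mul_assoc minv(1) matrix_vector_mul_lid)

lemma AAT_inner: "inner x ((A ** transpose A) *v x) = (norm (transpose A *v x))^2"
  for A :: "real^'n^'m"
proof -
  have "(A ** transpose A) *v x = A *v (transpose A *v x)" by (simp only: matrix_vector_mul_assoc)
  then have "inner x ((A ** transpose A) *v x) = inner (x v* A) (transpose A *v x)"
    by (simp only: dot_lmul_matrix)
  then show ?thesis by (simp only: power2_norm_eq_inner transpose_matrix_vector)
qed

lemma inv_from_bound:
  fixes A :: "real^'n^'m"
  assumes k: "kap > 0" and b: "\<And>y. kap * norm y \<le> norm (transpose A *v y)"
  shows "invertible (A ** transpose A)"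
proof -
  have "\<forall>x. (A ** transpose A) *v x = 0 \<longrightarrow> x = 0"
  proof (intro allI impI)
    fix x assume "(A ** transpose A) *v x = 0"
    then have "(norm (transpose A *v x))^2 = 0" using AAT_inner[of x A] by simp
    then have "kap * norm x \<le> 0" using b[of x] by simp
    then show "x = 0" using k by (simp add: mult_le_0_iff)
  qed
  then show ?thesis using invertible_left_inverse matrix_left_invertible_ker by blast
qed

context
  fixes A :: "real^'n^'m"
  assumes inv: "invertible (A ** transpose A)"
begin

lemma A_PP: "A *v PP A z = 0"
proof -
  have "A *v QQ A z = ((A ** transpose A) ** matrix_inv (A ** transpose A)) *v (A *v z)"
    unfolding QQ_def by (simp only: matrix_vector_mul_assoc matrix_mul_assoc)
  also have "\<dots> = A *v z" using minv(1)[OF inv] by simp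
  finally show ?thesis unfolding PP_def by (simp add: matrix_vector_mult_diff_distrib)
qed

lemma orth_T: "inner (transpose A *v y) (PP A z) = 0"
  by (metis A_PP dot_lmul_matrix inner_zero_right transpose_matrix_vector)

lemma orth_QP: "inner (QQ A w) (PP A z) = 0"
  unfolding QQ_def by (rule orth_T)

lemma orth_PQ: "inner (PP A z) (QQ A w) = 0"
  using orth_QP by (simp add: inner_commute)

lemma PP_add: "PP A (a + b) = PP A a + PP A b"
  unfolding PP_def QQ_def by (simp add: matrix_vector_right_distrib algebra_simps)
lemma PP_diff: "PP A (a - b) = PP A a - PP A b"
  unfolding PP_def QQ_def by (simp add: matrix_vector_mult_diff_distrib algebra_simps)
lemma QQ_add: "QQ A (a + b) = QQ A a + QQ A b"
  unfolding QQ_def by (simp add: matrix_vector_right_distrib algebra_simps)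
lemma QQ_diff: "QQ A (a - b) = QQ A a - QQ A b"
  unfolding QQ_def by (simp add: matrix_vector_mult_diff_distrib algebra_simps)

lemma decomp: "z = PP A z + QQ A z" unfolding PP_def by simp

lemma pyth: "(norm z)^2 = (norm (PP A z))^2 + (norm (QQ A z))^2"
proof -
  have "(norm z)^2 = (norm (PP A z + QQ A z))^2" using decomp by metis
  also have "\<dots> = (norm (PP A z))^2 + (norm (QQ A z))^2"
    using orth_PQ by (simp add: power2_norm_eq_inner inner_add_left inner_add_right inner_commute)
  finally show ?thesis .
qed

lemma QQ_T: "QQ A (transpose A *v y) = transpose A *v y"
proof -
  have "matrix_inv (A ** transpose A) *v (A *v (transpose A *v y)) = (matrix_inv (A ** transpose A) ** (A ** transpose A)) *v y"
    by (simp only: matrix_vector_mul_assoc)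
  also have "\<dots> = y" using minv(2)[OF inv] by simp
  finally show ?thesis unfolding QQ_def by simp
qed

lemma PP_T: "PP A (transpose A *v y) = 0"
  unfolding PP_def using QQ_T by simp

lemma PP_contr: "norm (PP A z) \<le> norm z"
  using pyth[of z] by (metis le_add_same_cancel1 norm_ge_zero power2_le_imp_le zero_le_power2)

lemma inner_PP: "inner z (PP A w) = inner (PP A z) (PP A w)"
proof -
  have "inner z (PP A w) = inner (PP A z + QQ A z) (PP A w)" using decomp by metis
  then show ?thesis using orth_QP by (simp add: inner_add_left)
qed

lemma inv_bound:
  assumes k: "kap > 0" and b: "\<And>y. kap * norm y \<le> norm (transpose A *v y)"
  shows "kap * norm (transpose A *v (matrix_inv (A ** transpose A) *v v)) \<le> norm v"
proof -
  define y where "y = matrix_inv (A ** transpose A) *v v"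
  define t where "t = norm (transpose A *v y)"
  have My: "(A ** transpose A) *v y = v"
    unfolding y_def using minv(1)[OF inv] by (simp add: matrix_vector_mul_assoc)
  have "t^2 = inner y v" using AAT_inner[of y A] My t_def by simp
  also have "\<dots> \<le> norm y * norm v" by (rule norm_cauchy_schwarz)
  finally have t2: "t^2 \<le> norm y * norm v" .
  have ky: "kap * norm y \<le> t" using b t_def by simp
  have t0: "t \<ge> 0" using t_def by simp
  have "kap * t^2 \<le> kap * (norm y * norm v)" using t2 k by (simp add: mult_left_mono)
  also have "\<dots> = (kap * norm y) * norm v" by (simp add: mult.assoc)
  also have "\<dots> \<le> t * norm v" using ky by (simp add: mult_right_mono)
  finally have h: "(kap * t) * t \<le> norm v * t" by (simp add: power2_eq_square mult_ac)
  have "kap * t \<le> norm v"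
  proof (cases "t = 0")
    case True then show ?thesis by simp
  next
    case False then have "t > 0" using t0 by simp
    then show ?thesis using h by (simp only: mult_le_cancel_right_pos)
  qed
  then show ?thesis unfolding t_def y_def .
qed

end

lemma aux_sub: "a = b + c \<Longrightarrow> e = d + c \<Longrightarrow> (a::'a::ab_group_add) - e = b - d"
  by simp

lemma sintheta:
  fixes A B :: "real^'n^'m"
  assumes invA: "invertible (A ** transpose A)" and invB: "invertible (B ** transpose B)"
    and s: "0 \<le> s" "s < 1"
    and S1: "\<And>y. norm (PP A (transpose B *v y)) \<le> s * norm (transpose B *v y)"
    and injB: "\<And>y. transpose B *v y = 0 \<Longrightarrow> y = 0"
  shows "norm (PP A g - PP B g) \<le> s * norm g"
proof -
  have S2: "(1 - s^2) * (norm x)^2 \<le> (norm (QQ A x))^2" if "x = transpose B *v y" for x y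
  proof -
    have "norm (PP A x) \<le> s * norm x" using S1 that by simp
    then have "(norm (PP A x))^2 \<le> (s * norm x)^2" by (simp add: power_mono)
    then show ?thesis using pyth[OF invA, of x] by (simp add: algebra_simps power_mult_distrib)
  qed
  have S3: "\<exists>y. QQ A (transpose B *v y) = QQ A z" for z
  proof -
    let ?K = "A ** transpose B"
    have "\<forall>y. ?K *v y = 0 \<longrightarrow> y = 0"
    proof (intro allI impI)
      fix y assume "?K *v y = 0"
      then have "A *v (transpose B *v y) = 0" by (simp only: matrix_vector_mul_assoc)
      then have "QQ A (transpose B *v y) = 0" unfolding QQ_def by (simp del: transpose_matrix_vector)
      then have "(1 - s^2) * (norm (transpose B *v y))^2 \<le> 0" using S2[of _ y] by simp
      moreover have "1 - s^2 > 0" using s by (simp add: power_less_one_iff abs_less_iff) 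
      ultimately have "transpose B *v y = 0"
        by (simp add: mult_le_0_iff)
      then show "y = 0" using injB by blast
    qed
    then have "\<exists>B'. B' ** ?K = mat 1" using matrix_left_invertible_ker by blast
    then have "\<exists>B'. ?K ** B' = mat 1" using matrix_left_right_inverse by blast
    then have "surj (\<lambda>x. ?K *v x)" using matrix_right_invertible_surjective by blast
    then obtain y where y: "?K *v y = A *v z" by (metis surjD)
    then have "A *v (transpose B *v y) = A *v z" by (simp only: matrix_vector_mul_assoc)
    then show ?thesis unfolding QQ_def by metis
  qed
  have S4: "(1 - s^2) * (norm w)^2 \<le> (norm (QQ B w))^2" if w: "w = QQ A z" for w z
  proof -
    obtain y where y: "QQ A (transpose B *v y) = w" using S3 w by metis
    define x where "x = transpose B *v y"
    have "(norm w)^2 = inner (QQ A x) w" using y x_def by (simp add: power2_norm_eq_inner)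
    also have "\<dots> = inner x w"
    proof -
      have "inner x w = inner (PP A x + QQ A x) w" using decomp[OF invA, of x] by metis
      also have "\<dots> = inner (QQ A x) w" using orth_PQ[OF invA] w by (simp add: inner_add_left)
      finally show ?thesis by simp
    qed
    also have "\<dots> = inner x (QQ B w)"
    proof -
      have "inner x w = inner x (PP B w + QQ B w)" using decomp[OF invB, of w] by metis
      also have "\<dots> = inner x (QQ B w)" using orth_T[OF invB] x_def by (simp add: inner_add_right)
      finally show ?thesis .
    qed
    also have "\<dots> \<le> norm x * norm (QQ B w)" by (rule norm_cauchy_schwarz)
    finally have h1: "(norm w)^2 \<le> norm x * norm (QQ B w)" .
    have h2: "(1 - s^2) * (norm x)^2 \<le> (norm w)^2" using S2[OF x_def] y x_def by simp
    have sp: "1 - s^2 > 0" using s by (simp add: power_less_one_iff abs_less_iff)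
    have "(norm w ^ 2)^2 \<le> (norm x)^2 * (norm (QQ B w))^2"
      using power_mono[OF h1 zero_le_power2, of 2] by (simp add: power_mult_distrib)
    then have "(1 - s^2) * (norm w ^ 2)^2 \<le> ((1 - s^2) * (norm x)^2) * (norm (QQ B w))^2"
      using sp by (simp add: mult_left_mono mult.assoc)
    also have "\<dots> \<le> (norm w)^2 * (norm (QQ B w))^2"
      using h2 by (simp add: mult_right_mono)
    finally have h3: "(1 - s^2) * (norm w ^ 2) * (norm w ^ 2) \<le> (norm (QQ B w))^2 * (norm w)^2"
      by (simp add: power2_eq_square mult_ac)
    show ?thesis
    proof (cases "norm w = 0")
      case True then show ?thesis by simp
    next
      case False
      then have "norm w ^ 2 > 0" by simp
      then show ?thesis using h3 by (simp only: mult_le_cancel_right_pos)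
    qed
  qed
  have S5: "(norm (PP B w))^2 \<le> s^2 * (norm w)^2" if "w = QQ A z" for w z
    using S4[OF that] pyth[OF invB, of w] by (simp add: algebra_simps)
  have S6: "norm (QQ A (PP B p)) \<le> s * norm (PP B p)" for p
  proof -
    define q where "q = PP B p"
    define w where "w = QQ A q"
    have "(norm w)^2 = inner q w"
    proof -
      have "inner q w = inner (PP A q + QQ A q) w" using decomp[OF invA, of q] by metis
      also have "\<dots> = inner w w" using orth_PQ[OF invA] w_def by (simp add: inner_add_left)
      finally show ?thesis by (simp add: power2_norm_eq_inner)
    qed
    also have "\<dots> = inner q (PP B w)"
    proof -
      have "inner q w = inner q (PP B w + QQ B w)" using decomp[OF invB, of w] by metis
      also have "\<dots> = inner q (PP B w)" using orth_PQ[OF invB] q_def by (simp add: inner_add_right)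
      finally show ?thesis .
    qed
    also have "\<dots> \<le> norm q * norm (PP B w)" by (rule norm_cauchy_schwarz)
    also have "\<dots> \<le> norm q * (s * norm w)"
    proof -
      have "(norm (PP B w))^2 \<le> (s * norm w)^2" using S5[OF w_def] by (simp add: power_mult_distrib)
      then have "norm (PP B w) \<le> s * norm w" by (rule power2_le_imp_le) (use s in simp)
      then show ?thesis by (simp add: mult_left_mono)
    qed
    finally have "norm w * norm w \<le> (s * norm q) * norm w" by (simp add: power2_eq_square mult_ac)
    then have hw: "norm w * norm w \<le> (s * norm q) * norm w" .
    have "norm w \<le> s * norm q"
    proof (cases "norm w = 0")
      case True then show ?thesis using s by simp
    next
      case False then have "norm w > 0" by simp
      then show ?thesis using hw by (simp only: mult_le_cancel_right_pos)
    qed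
    then show ?thesis unfolding w_def q_def .
  qed
  have eq: "PP A g - PP B g = PP A (QQ B g) - QQ A (PP B g)"
  proof -
    have h0: "PP A g - PP B g = QQ B g - QQ A g" unfolding PP_def by simp
    have h1: "QQ A g = QQ A (PP B g) + QQ A (QQ B g)"
      using QQ_add[OF invA, of "PP B g" "QQ B g"] decomp[OF invB, of g] by metis
    have h2: "QQ B g = PP A (QQ B g) + QQ A (QQ B g)" by (rule decomp[OF invA])
    show ?thesis unfolding h0 by (rule aux_sub[OF h2 h1])
  qed
  have "(norm (PP A g - PP B g))^2 = (norm (PP A (QQ B g)))^2 + (norm (QQ A (PP B g)))^2"
    unfolding eq using orth_PQ[OF invA]
    by (simp add: power2_norm_eq_inner inner_diff_left inner_diff_right inner_commute)
  also have "\<dots> \<le> (s * norm (QQ B g))^2 + (s * norm (PP B g))^2"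
  proof (intro add_mono power_mono)
    show "norm (PP A (QQ B g)) \<le> s * norm (QQ B g)" using S1 unfolding QQ_def by metis
    show "norm (QQ A (PP B g)) \<le> s * norm (PP B g)" by (rule S6)
  qed auto
  also have "\<dots> = (s * norm g)^2" using pyth[OF invB, of g] by (simp add: power_mult_distrib algebra_simps)
  finally show ?thesis by (rule power2_le_imp_le) (use s in simp)
qed


lemma norm1_nonneg: "norm1 v \<ge> 0"
  unfolding norm1_def by (simp add: sum_nonneg)

lemma norm_le_norm1: "norm v \<le> norm1 v"
  unfolding norm1_def by (rule norm_le_l1_cart)

lemma norm1_add: "norm1 (a + b) \<le> norm1 a + norm1 b"
  unfolding norm1_def by (simp add: sum.distrib[symmetric] sum_mono abs_triangle_ineq)

lemma norm1_diff: "norm1 (a - b) \<le> norm1 a + norm1 b"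
  unfolding norm1_def by (simp add: sum.distrib[symmetric] sum_mono abs_triangle_ineq4)

lemma norm1_commute: "norm1 (a - b) = norm1 (b - a)"
  unfolding norm1_def by (simp add: abs_minus_commute)

lemma inner_inf_1: "\<bar>inner a b\<bar> \<le> norm_inf a * norm1 b"
proof -
  have "\<bar>inner a b\<bar> = \<bar>\<Sum>i\<in>UNIV. a$i * b$i\<bar>" by (simp add: inner_vec_def)
  also have "\<dots> \<le> (\<Sum>i\<in>UNIV. \<bar>a$i\<bar> * \<bar>b$i\<bar>)" by (rule order_trans[OF sum_abs]) (simp add: abs_mult)
  also have "\<dots> \<le> (\<Sum>i\<in>UNIV. norm_inf a * \<bar>b$i\<bar>)"
  proof (rule sum_mono)
    fix i :: 'a
    have "\<bar>a$i\<bar> \<le> norm_inf a" unfolding norm_inf_def by (rule Max_ge) auto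
    then show "\<bar>a$i\<bar> * \<bar>b$i\<bar> \<le> norm_inf a * \<bar>b$i\<bar>" by (simp add: mult_right_mono)
  qed
  also have "\<dots> = norm_inf a * norm1 b" unfolding norm1_def by (simp add: sum_distrib_left)
  finally show ?thesis .
qed

lemma mv_neg: "(M::real^'n^'m) *v (- v) = - (M *v v)"
  by (metis diff_0 matrix_vector_mult_diff_distrib matrix_vector_mult_0_right)

lemma PP_scale: "PP A (r *\<^sub>R v) = r *\<^sub>R PP A v"
  unfolding PP_def QQ_def by (simp add: matrix_vector_mult_scaleR scaleR_diff_right vector_scaleR_matrix_ac)

lemma null_proj_PP: "null_proj B *v g = PP B g"
  unfolding null_proj_def PP_def QQ_def
  by (simp only: matrix_vector_mult_diff_rdistrib matrix_vector_mul_lid matrix_vector_mul_assoc matrix_mul_assoc)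

lemma step:
  fixes A B :: "real^'n^'m" and g gt d :: "real^'n" and c ct :: "real^'m"
  assumes E1: "\<And>z. norm1 ((A - B) *v z) \<le> eJ * norm z"
    and sigB: "\<And>y. gam * norm y \<le> norm (transpose B *v y)"
    and gam: "eJ < gam" and eJ0: "0 \<le> eJ"
    and bpos: "bet > 0"
    and feas: "ct + A *v d = 0"
    and opt: "\<And>d'. ct + A *v d' = 0 \<Longrightarrow>
        1/2 * bet * (norm d)\<^sup>2 + gt \<bullet> d \<le> 1/2 * bet * (norm d')\<^sup>2 + gt \<bullet> d'"
    and tau: "0 < tau" "tau < 1" and ppos: "p > 0"
    and pib: "p \<ge> 1 / (1 - tau) * norm_inf (matrix_inv (A ** transpose A) *v (A *v gt))"
    and ec: "norm1 (ct - c) \<le> eps_c" and eg: "norm (gt - g) \<le> eps_g"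
  shows "g \<bullet> d + p * norm1 (c + B *v d) - p * norm1 c
    \<le> - (1 / bet) * (g \<bullet> PP B g)
       + (1 / bet) * ((norm g)\<^sup>2 * (1/gam) * eJ + eps_g * norm g)
       - tau * p * norm1 c
       + eps_g * (1 / (gam - eJ)) * (norm1 c + eps_c)
       + p * ((2 - tau) * eps_c
           + eJ * ((1 / (gam - eJ)) * (norm1 c + eps_c)
               + (1 / bet) * (norm (PP B g) + norm g * (1/gam) * eJ + eps_g)))"
proof -
  define E where "E = A - B"
  define kap where "kap = gam - eJ"
  define s where "s = eJ / gam"
  have gam0: "gam > 0" using gam eJ0 by simp
  have kap0: "kap > 0" using gam kap_def by simp
  have s0: "0 \<le> s" "s < 1" unfolding s_def using gam eJ0 gam0 by auto
  have E1': "norm (E *v z) \<le> eJ * norm z" for z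
    using norm_le_norm1[of "E *v z"] E1[of z] E_def by simp
  have E2: "norm (transpose E *v y) \<le> eJ * norm y" for y
  proof -
    define w where "w = transpose E *v y"
    have "(norm w)^2 = inner (y v* E) w" by (simp add: w_def power2_norm_eq_inner)
    also have "\<dots> = inner y (E *v w)" by (rule dot_lmul_matrix)
    also have "\<dots> \<le> norm y * norm (E *v w)" by (rule norm_cauchy_schwarz)
    also have "\<dots> \<le> norm y * (eJ * norm w)" by (rule mult_left_mono[OF E1']) simp
    finally have h: "norm w * norm w \<le> (eJ * norm y) * norm w" by (simp add: power2_eq_square mult_ac)
    have "norm w \<le> eJ * norm y"
    proof (cases "norm w = 0")
      case True then show ?thesis using eJ0 by simp
    next
      case False then have "norm w > 0" by simp
      then show ?thesis using h by (simp only: mult_le_cancel_right_pos)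
    qed
    then show ?thesis unfolding w_def .
  qed
  have BT: "transpose B *v y = transpose A *v y - transpose E *v y" for y
    unfolding E_def by (simp add: vector_matrix_mult_diff_rdistrib)
  have sigA: "kap * norm y \<le> norm (transpose A *v y)" for y
  proof -
    have "gam * norm y \<le> norm (transpose A *v y - transpose E *v y)" using sigB[of y] BT by simp
    also have "\<dots> \<le> norm (transpose A *v y) + norm (transpose E *v y)" by (rule norm_triangle_ineq4)
    finally have "gam * norm y \<le> norm (transpose A *v y) + norm (transpose E *v y)" .
    moreover have "gam * norm y = eJ * norm y + kap * norm y" unfolding kap_def by (simp add: algebra_simps)
    ultimately show ?thesis using E2[of y] by linarith
  qed
  have invA: "invertible (A ** transpose A)" by (rule inv_from_bound[OF kap0 sigA])
  have invB: "invertible (B ** transpose B)" by (rule inv_from_bound[OF gam0 sigB])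
  have S1: "norm (PP A (transpose B *v y)) \<le> s * norm (transpose B *v y)" for y
  proof -
    have "PP A (transpose B *v y) = PP A (transpose A *v y) - PP A (transpose E *v y)"
      using BT PP_diff[OF invA] by metis
    also have "\<dots> = - PP A (transpose E *v y)" using PP_T[OF invA] by simp
    finally have "norm (PP A (transpose B *v y)) = norm (PP A (transpose E *v y))" by simp
    also have "\<dots> \<le> norm (transpose E *v y)" by (rule PP_contr[OF invA])
    also have "\<dots> \<le> eJ * norm y" by (rule E2)
    also have "\<dots> = s * (gam * norm y)" unfolding s_def using gam0 by simp
    also have "\<dots> \<le> s * norm (transpose B *v y)" by (rule mult_left_mono[OF sigB s0(1)])
    finally show ?thesis .
  qed
  have injB: "y = 0" if "transpose B *v y = 0" for y
    using sigB[of y] that gam0 by (simp add: mult_le_0_iff)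
  have D: "norm (PP A g - PP B g) \<le> s * norm g"
    by (rule sintheta[OF invA invB s0 S1 injB])
  define z where "z = PP A (bet *\<^sub>R d + gt)"
  have Az: "A *v z = 0" unfolding z_def by (rule A_PP[OF invA])
  have z0: "z = 0"
  proof -
    define t where "t = - 1 / bet"
    have feas': "ct + A *v (d + t *\<^sub>R z) = 0"
      using feas Az by (simp add: matrix_vector_right_distrib matrix_vector_mult_scaleR)
    have o: "1/2 * bet * (norm d)\<^sup>2 + gt \<bullet> d \<le> 1/2 * bet * (norm (d + t *\<^sub>R z))\<^sup>2 + gt \<bullet> (d + t *\<^sub>R z)"
      by (rule opt[OF feas'])
    have n2: "(norm (d + t *\<^sub>R z))^2 = (norm d)^2 + 2 * t * inner d z + t^2 * (norm z)^2"
      unfolding power2_norm_eq_inner by (simp add: inner_add_left inner_add_right inner_commute power2_eq_square algebra_simps)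
    have ip: "bet * inner d z + inner gt z = (norm z)^2"
    proof -
      have "inner (bet *\<^sub>R d + gt) z = inner z z" unfolding z_def by (rule inner_PP[OF invA])
      then show ?thesis by (simp add: inner_add_left power2_norm_eq_inner)
    qed
    have bt: "bet * t = -1" using bpos t_def by simp
    from o n2 have "0 \<le> t * (bet * inner d z + inner gt z) + 1/2 * (bet * t) * t * (norm z)^2"
      by (simp add: inner_add_right algebra_simps power2_eq_square)
    then have "0 \<le> t * (norm z)^2 - 1/2 * t * (norm z)^2" using ip bt by simp
    then have "0 \<le> t * (norm z)^2" by simp
    moreover have "t < 0" using bpos t_def by simp
    ultimately have "(norm z)^2 \<le> 0" by (simp add: mult_le_0_iff zero_le_mult_iff)
    then show ?thesis by simp
  qed
  have Pd: "PP A d = - (1 / bet) *\<^sub>R PP A gt"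
  proof -
    have h: "bet *\<^sub>R PP A d + PP A gt = 0" using z0 unfolding z_def by (simp add: PP_add[OF invA] PP_scale)
    have "PP A d = (1/bet) *\<^sub>R (bet *\<^sub>R PP A d)" using bpos by simp
    also have "bet *\<^sub>R PP A d = - PP A gt" using h by (simp add: eq_neg_iff_add_eq_0)
    finally show ?thesis by simp
  qed
  define Mi where "Mi = matrix_inv (A ** transpose A)"
  define w where "w = Mi *v ct"
  define u where "u = - (transpose A *v w)"
  have Qd: "QQ A d = u"
  proof -
    have "A *v d = - ct" using feas by (simp add: eq_neg_iff_add_eq_0 add.commute)
    then show ?thesis unfolding QQ_def u_def w_def Mi_def by (simp add: mv_neg)
  qed
  have dd: "d = PP A d + u" using decomp[OF invA, of d] Qd by simp
  have n1ct: "norm1 ct \<le> norm1 c + eps_c"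
    using norm1_add[of c "ct - c"] ec by simp
  have nu: "norm u \<le> (1 / kap) * (norm1 c + eps_c)"
  proof -
    have "kap * norm (transpose A *v (Mi *v ct)) \<le> norm ct" unfolding Mi_def by (rule inv_bound[OF invA kap0 sigA])
    then have "kap * norm u \<le> norm1 ct" using norm_le_norm1[of ct] u_def w_def by simp
    then have "kap * norm u \<le> norm1 c + eps_c" using n1ct by simp
    then show ?thesis using kap0 by (simp add: field_simps)
  qed
  have Msym: "transpose (A ** transpose A) = A ** transpose A" by (simp add: matrix_transpose_mul)
  define S where "S = Mi *v (A *v gt)"
  have gtu: "inner gt u = - inner S ct"
  proof -
    have MS: "(A ** transpose A) *v S = A *v gt"
      unfolding S_def Mi_def by (rule minv_app[OF invA])
    have Mw: "(A ** transpose A) *v w = ct"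
      unfolding w_def Mi_def by (rule minv_app[OF invA])
    have "inner gt u = - inner (w v* A) gt" unfolding u_def by (simp add: inner_commute)
    also have "\<dots> = - inner w (A *v gt)" by (simp add: dot_lmul_matrix)
    also have "\<dots> = - inner w ((A ** transpose A) *v S)" using MS by simp
    also have "(A ** transpose A) *v S = S v* transpose (A ** transpose A)" by simp
    also have "\<dots> = S v* (A ** transpose A)" using Msym by simp
    also have "inner w (S v* (A ** transpose A)) = inner S ((A ** transpose A) *v w)"
      by (metis dot_lmul_matrix inner_commute)
    also have "\<dots> = inner S ct" using Mw by simp
    finally show ?thesis .
  qed
  have niS: "norm_inf S \<le> (1 - tau) * p"
    using pib tau unfolding S_def Mi_def by (simp add: field_simps)
  have gtu_b: "inner gt u \<le> (1 - tau) * p * (norm1 c + eps_c)"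
  proof -
    have "inner gt u \<le> norm_inf S * norm1 ct" using gtu inner_inf_1[of S ct] by simp
    also have "\<dots> \<le> (1 - tau) * p * norm1 ct" by (rule mult_right_mono[OF niS norm1_nonneg])
    also have "\<dots> \<le> (1 - tau) * p * (norm1 c + eps_c)" using n1ct tau ppos by (simp add: mult_left_mono)
    finally show ?thesis .
  qed
  have gu: "inner g u \<le> (1 - tau) * p * (norm1 c + eps_c) + eps_g * ((1 / kap) * (norm1 c + eps_c))"
  proof -
    have "inner g u = inner gt u + inner (g - gt) u" by (simp add: inner_diff_left)
    also have "inner (g - gt) u \<le> norm (g - gt) * norm u" by (rule norm_cauchy_schwarz)
    also have "\<dots> \<le> eps_g * ((1 / kap) * (norm1 c + eps_c))"
      using eg nu order_trans[OF norm_ge_zero eg] by (intro mult_mono) (auto simp: norm_minus_commute)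
    finally show ?thesis using gtu_b by simp
  qed
  have PAg: "norm (PP A g) \<le> norm (PP B g) + s * norm g"
    using norm_triangle_ineq[of "PP B g" "PP A g - PP B g"] D by simp
  have PAgt: "norm (PP A gt) \<le> norm (PP B g) + s * norm g + eps_g"
  proof -
    have "PP A gt = PP A g + PP A (gt - g)" using PP_diff[OF invA, of gt g] by simp
    then have "norm (PP A gt) \<le> norm (PP A g) + norm (PP A (gt - g))" by (metis norm_triangle_ineq)
    also have "norm (PP A (gt - g)) \<le> eps_g" using PP_contr[OF invA, of "gt - g"] eg by simp
    finally show ?thesis using PAg by simp
  qed
  have gPAgt: "g \<bullet> PP A gt \<ge> g \<bullet> PP B g - s * (norm g)^2 - eps_g * norm g"
  proof -
    have "g \<bullet> PP A gt = g \<bullet> PP B g + g \<bullet> (PP A g - PP B g) + g \<bullet> PP A (gt - g)"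
      using PP_diff[OF invA, of gt g] by (simp add: inner_diff_right inner_add_right)
    moreover have "g \<bullet> (PP A g - PP B g) \<ge> - (s * (norm g)^2)"
    proof -
      have "\<bar>g \<bullet> (PP A g - PP B g)\<bar> \<le> norm g * norm (PP A g - PP B g)" by (rule Cauchy_Schwarz_ineq2)
      also have "\<dots> \<le> norm g * (s * norm g)" by (rule mult_left_mono[OF D]) simp
      finally show ?thesis by (simp add: power2_eq_square mult_ac)
    qed
    moreover have "g \<bullet> PP A (gt - g) \<ge> - (eps_g * norm g)"
    proof -
      have "\<bar>g \<bullet> PP A (gt - g)\<bar> \<le> norm g * norm (PP A (gt - g))" by (rule Cauchy_Schwarz_ineq2)
      also have "\<dots> \<le> norm g * eps_g"
        using PP_contr[OF invA, of "gt - g"] eg by (intro mult_left_mono) auto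
      finally show ?thesis by (simp add: mult_ac)
    qed
    ultimately show ?thesis by simp
  qed
  define vv where "vv = PP A d"
  have gv: "g \<bullet> vv \<le> - (1 / bet) * (g \<bullet> PP B g - s * (norm g)^2 - eps_g * norm g)"
  proof -
    have "g \<bullet> vv = - (1 / bet) * (g \<bullet> PP A gt)" unfolding vv_def Pd by simp
    also have "\<dots> \<le> - (1 / bet) * (g \<bullet> PP B g - s * (norm g)^2 - eps_g * norm g)"
      using gPAgt bpos by (simp add: divide_simps)
    finally show ?thesis .
  qed
  have nd: "norm d \<le> (1 / kap) * (norm1 c + eps_c) + (1 / bet) * (norm (PP B g) + s * norm g + eps_g)"
  proof -
    have "norm d \<le> norm vv + norm u" using dd vv_def by (metis norm_triangle_ineq)
    moreover have "norm vv = (1 / bet) * norm (PP A gt)" unfolding vv_def Pd using bpos by simp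
    moreover have "(1 / bet) * norm (PP A gt) \<le> (1 / bet) * (norm (PP B g) + s * norm g + eps_g)"
      using PAgt bpos by (simp add: divide_right_mono)
    ultimately show ?thesis using nu by simp
  qed
  have cBd: "norm1 (c + B *v d) \<le> eps_c + eJ * norm d"
  proof -
    have "c + B *v d = (c - ct) - E *v d"
      using feas unfolding E_def by (simp add: matrix_vector_mult_diff_rdistrib algebra_simps)
    then have "norm1 (c + B *v d) \<le> norm1 (c - ct) + norm1 (E *v d)" using norm1_diff by metis
    then show ?thesis using ec E1[of d] norm1_commute[of c ct] E_def by simp
  qed
  have pcBd: "p * norm1 (c + B *v d) \<le> p * eps_c + p * eJ * ((1 / kap) * (norm1 c + eps_c) + (1 / bet) * (norm (PP B g) + s * norm g + eps_g))"
  proof -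
    have "p * norm1 (c + B *v d) \<le> p * (eps_c + eJ * norm d)" using cBd ppos by (simp add: mult_left_mono)
    also have "\<dots> \<le> p * (eps_c + eJ * ((1 / kap) * (norm1 c + eps_c) + (1 / bet) * (norm (PP B g) + s * norm g + eps_g)))"
      using nd ppos eJ0 by (intro mult_left_mono add_left_mono) auto
    finally show ?thesis by (simp add: algebra_simps)
  qed
  have gd: "g \<bullet> d = g \<bullet> vv + g \<bullet> u" using dd vv_def by (metis inner_add_right)
  have sg: "s * (norm g)^2 = (norm g)^2 * (1/gam) * eJ" "s * norm g = norm g * (1/gam) * eJ"
    using s_def by auto
  show ?thesis
    using gd gv gu pcBd unfolding kap_def[symmetric] sg
    by (simp add: algebra_simps)
qed


lemma norm1_zero: "norm1 (0::real^'m) = 0" unfolding norm1_def by simp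

lemma norm1_mv_le: "norm1 (E *v z) \<le> (\<Sum>i\<in>UNIV. \<Sum>j\<in>UNIV. \<bar>E$i$j\<bar>) * norm z"
  for E :: "real^'n^'m"
proof -
  have "\<bar>(E *v z)$i\<bar> \<le> (\<Sum>j\<in>UNIV. \<bar>E$i$j\<bar>) * norm z" for i
  proof -
    have "\<bar>(E *v z)$i\<bar> = \<bar>\<Sum>j\<in>UNIV. E$i$j * z$j\<bar>" by (simp add: matrix_vector_mult_def)
    also have "\<dots> \<le> (\<Sum>j\<in>UNIV. \<bar>E$i$j\<bar> * \<bar>z$j\<bar>)" by (rule order_trans[OF sum_abs]) (simp add: abs_mult)
    also have "\<dots> \<le> (\<Sum>j\<in>UNIV. \<bar>E$i$j\<bar> * norm z)"
      by (rule sum_mono) (simp add: mult_left_mono component_le_norm_cart)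
    also have "\<dots> = (\<Sum>j\<in>UNIV. \<bar>E$i$j\<bar>) * norm z" by (simp add: sum_distrib_right)
    finally show ?thesis .
  qed
  then have "norm1 (E *v z) \<le> (\<Sum>i\<in>UNIV. (\<Sum>j\<in>UNIV. \<bar>E$i$j\<bar>) * norm z)"
    unfolding norm1_def by (rule sum_mono)
  then show ?thesis by (simp add: sum_distrib_right)
qed

lemma norm12_bound: "norm1 (E *v z) \<le> norm12 E * norm z"
  for E :: "real^'n^'m"
proof (cases "z = 0")
  case True then show ?thesis by (simp add: norm1_zero)
next
  case False
  define K where "K = (\<Sum>i\<in>UNIV. \<Sum>j\<in>UNIV. \<bar>E$i$j\<bar>)"
  have bdd: "bdd_above {norm1 (E *v x) / norm x | x. x \<noteq> 0}"
  proof (rule bdd_aboveI)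
    fix r assume "r \<in> {norm1 (E *v x) / norm x | x. x \<noteq> 0}"
    then obtain x where x: "x \<noteq> 0" "r = norm1 (E *v x) / norm x" by blast
    have "norm x > 0" using x by simp
    then show "r \<le> K" unfolding x(2) K_def using norm1_mv_le[of E x] by (simp add: pos_divide_le_eq)
  qed
  have "norm1 (E *v z) / norm z \<le> norm12 E"
    unfolding norm12_def by (rule cSup_upper[OF _ bdd]) (use False in blast)
  then show ?thesis using False by (simp add: divide_simps)
qed

lemma sigma_bound:
  fixes B :: "real^'n^'m"
  assumes "sigma_min B \<ge> gam"
  shows "gam * norm y \<le> norm (transpose B *v y)"
proof (cases "y = 0")
  case True then show ?thesis by simp
next
  case False
  define y' where "y' = (1 / norm y) *\<^sub>R y"
  have u: "norm y' = 1" using False y'_def by simp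
  have bdd: "bdd_below {norm (transpose B *v y) | y. norm y = 1}"
    by (rule bdd_belowI[of _ 0]) auto
  have "sigma_min B \<le> norm (transpose B *v y')"
    unfolding sigma_min_def by (rule cInf_lower[OF _ bdd]) (use u in blast)
  then have "gam \<le> norm (transpose B *v y')" using assms by simp
  also have "transpose B *v y' = (1 / norm y) *\<^sub>R (transpose B *v y)"
    unfolding y'_def by (simp only: matrix_vector_mult_scaleR)
  finally have "gam \<le> norm (transpose B *v y) / norm y" by simp
  then show ?thesis using False by (simp add: divide_simps)
qed

theorem lemma3p2:
  fixes f :: "real^'n \<Rightarrow> real" and c :: "real^'n \<Rightarrow> real^'m"
    and g :: "real^'n \<Rightarrow> real^'n" and J :: "real^'n \<Rightarrow> real^'n^'m"
    and ft :: "real^'n \<Rightarrow> real" and ct :: "real^'n \<Rightarrow> real^'m"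
    and gt :: "real^'n \<Rightarrow> real^'n" and Jt :: "real^'n \<Rightarrow> real^'n^'m"
    and eps_f eps_c eps_g eps_J gamma tau :: real
    and x d :: "nat \<Rightarrow> real^'n" and beta pi :: "nat \<Rightarrow> real"
  assumes mn: "CARD('m) < CARD('n)"
    and grad: "\<And>z. (f has_derivative (\<lambda>h. g z \<bullet> h)) (at z)"
    and jac: "\<And>z. (c has_derivative (\<lambda>h. J z *v h)) (at z)"
    and err_f: "\<And>z. \<bar>ft z - f z\<bar> \<le> eps_f"
    and err_c: "\<And>z. norm1 (ct z - c z) \<le> eps_c"
    and err_g: "\<And>z. norm (gt z - g z) \<le> eps_g"
    and err_J: "\<And>z. norm12 (Jt z - J z) \<le> eps_J"
    and sig: "\<And>k. sigma_min (J (x k)) \<ge> gamma"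
    and gam: "gamma > eps_J"
    and beta_pos: "\<And>k. beta k > 0"
    and d_feas: "\<And>k. ct (x k) + Jt (x k) *v d k = 0"
    and d_opt: "\<And>k d'. ct (x k) + Jt (x k) *v d' = 0 \<Longrightarrow>
        1/2 * beta k * (norm (d k))\<^sup>2 + gt (x k) \<bullet> d k
          \<le> 1/2 * beta k * (norm d')\<^sup>2 + gt (x k) \<bullet> d'"
    and tau: "0 < tau" "tau < 1"
    and pi_pos: "\<And>k. pi k > 0"
    and pi_bound: "\<And>k. pi k \<ge> 1 / (1 - tau) *
        norm_inf (matrix_inv (Jt (x k) ** transpose (Jt (x k))) *v (Jt (x k) *v gt (x k)))"
  shows "\<forall>k. (let delta = 1 / (gamma - eps_J); eta = 1 / gamma;
              gk = g (x k); ck = c (x k); Jk = J (x k); Pk = null_proj (J (x k));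
              ell = gk \<bullet> d k + pi k * norm1 (ck + Jk *v d k) - pi k * norm1 ck
          in ell \<le> - (1 / beta k) * (gk \<bullet> (Pk *v gk))
               + (1 / beta k) * ((norm gk)\<^sup>2 * eta * eps_J + eps_g * norm gk)
               - tau * pi k * norm1 ck
               + eps_g * delta * (norm1 ck + eps_c)
               + pi k * ((2 - tau) * eps_c
                   + eps_J * (delta * (norm1 ck + eps_c)
                       + (1 / beta k) * (norm (Pk *v gk) + norm gk * eta * eps_J + eps_g))))"
proof
  fix k
  let ?A = "Jt (x k)" and ?B = "J (x k)"
  have E1: "norm1 ((?A - ?B) *v z) \<le> eps_J * norm z" for z
  proof -
    have "norm1 ((?A - ?B) *v z) \<le> norm12 (?A - ?B) * norm z" by (rule norm12_bound)
    also have "\<dots> \<le> eps_J * norm z" by (rule mult_right_mono[OF err_J norm_ge_zero])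
    finally show ?thesis .
  qed
  have eJ0: "0 \<le> eps_J"
  proof -
    obtain i :: 'n where True by blast
    have "0 \<le> norm1 ((?A - ?B) *v axis i 1)" by (rule norm1_nonneg)
    also have "\<dots> \<le> eps_J * norm (axis i (1::real))" by (rule E1)
    finally show ?thesis by (simp add: zero_le_mult_iff)
  qed
  have sigB: "gamma * norm y \<le> norm (transpose ?B *v y)" for y
    by (rule sigma_bound[OF sig])
  have main: "g (x k) \<bullet> d k + pi k * norm1 (c (x k) + ?B *v d k) - pi k * norm1 (c (x k))
    \<le> - (1 / beta k) * (g (x k) \<bullet> PP ?B (g (x k)))
       + (1 / beta k) * ((norm (g (x k)))\<^sup>2 * (1/gamma) * eps_J + eps_g * norm (g (x k)))
       - tau * pi k * norm1 (c (x k))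
       + eps_g * (1 / (gamma - eps_J)) * (norm1 (c (x k)) + eps_c)
       + pi k * ((2 - tau) * eps_c
           + eps_J * ((1 / (gamma - eps_J)) * (norm1 (c (x k)) + eps_c)
               + (1 / beta k) * (norm (PP ?B (g (x k))) + norm (g (x k)) * (1/gamma) * eps_J + eps_g)))"
    by (rule step[OF E1 sigB gam eJ0 beta_pos d_feas d_opt tau pi_pos pi_bound err_c err_g])
  show "let delta = 1 / (gamma - eps_J); eta = 1 / gamma;
              gk = g (x k); ck = c (x k); Jk = J (x k); Pk = null_proj (J (x k));
              ell = gk \<bullet> d k + pi k * norm1 (ck + Jk *v d k) - pi k * norm1 ck
          in ell \<le> - (1 / beta k) * (gk \<bullet> (Pk *v gk))
               + (1 / beta k) * ((norm gk)\<^sup>2 * eta * eps_J + eps_g * norm gk)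
               - tau * pi k * norm1 ck
               + eps_g * delta * (norm1 ck + eps_c)
               + pi k * ((2 - tau) * eps_c
                   + eps_J * (delta * (norm1 ck + eps_c)
                       + (1 / beta k) * (norm (Pk *v gk) + norm gk * eta * eps_J + eps_g)))"
    unfolding Let_def null_proj_PP using main by simp
qed

end
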